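(* There is a universal constant $c>0$ such that the following holds. Let $P$ be an irreducible, aperiodic transition matrix on a finite state space $G$, reversible with respect to the probability measure $\pi$, with $\lambda$, $\pi_{\min}$, $\pi_{\max}$ as in the context. Then for all $x\neq y$ in $G$, $$\Pr_x[T_y<T_x^+]\ge \frac{c(1-\lambda)\pi_{\min}}{\pi_{\max}}.$$ In other words $u(P)\ge c(1-\lambda)\pi_{\min}/\pi_{\max}$.
   Context: $(X_t)$ is the chain with transition matrix $P$. $\lambda=\max_{j>1}|\lambda_j|$, where $1=\lambda_1>\lambda_2\ge\dots\ge\lambda_n>-1$ are the eigenvalues of $P$. $\pi_{\min}=\min_x\pi(x)$ and $\pi_{\max}=\max_x\pi(x)$. $T_y=\inf\{t\ge0:X_t=y\}$ and $T_x^+=\inf\{t\ge1:X_t=x\}$. $\Pr_x$ is the law of the chain started at $x$. $u(P):=\min_{x\ne y}\Pr_x[T_y<T_x^+]$. *)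

theory Defs
  imports "HOL-Analysis.Analysis" "HOL-Computational_Algebra.Computational_Algebra"
    "HOL-Combinatorics.Permutations"
begin

text \<open>A Markov chain on a finite state space G (a finite set of naturals; every finite
  state space is isomorphic to one) with transition matrix P, stored as a function
  nat => nat => real (values outside G are irrelevant).\<close>

definition stochastic :: "nat set \<Rightarrow> (nat \<Rightarrow> nat \<Rightarrow> real) \<Rightarrow> bool" where
  "stochastic G P \<longleftrightarrow> (\<forall>x\<in>G. \<forall>y\<in>G. P x y \<ge> 0) \<and> (\<forall>x\<in>G. (\<Sum>y\<in>G. P x y) = 1)"

fun mpow :: "nat set \<Rightarrow> (nat \<Rightarrow> nat \<Rightarrow> real) \<Rightarrow> nat \<Rightarrow> nat \<Rightarrow> nat \<Rightarrow> real" where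
  "mpow G P 0 x y = (if x = y then 1 else 0)"
| "mpow G P (Suc n) x y = (\<Sum>z\<in>G. P x z * mpow G P n z y)"

definition irreducible_chain :: "nat set \<Rightarrow> (nat \<Rightarrow> nat \<Rightarrow> real) \<Rightarrow> bool" where
  "irreducible_chain G P \<longleftrightarrow> (\<forall>x\<in>G. \<forall>y\<in>G. \<exists>n. mpow G P n x y > 0)"

definition aperiodic_chain :: "nat set \<Rightarrow> (nat \<Rightarrow> nat \<Rightarrow> real) \<Rightarrow> bool" where
  "aperiodic_chain G P \<longleftrightarrow> (\<forall>x\<in>G. Gcd {n. 0 < n \<and> mpow G P n x x > 0} = (1::nat))"

definition reversible_chain :: "nat set \<Rightarrow> (nat \<Rightarrow> nat \<Rightarrow> real) \<Rightarrow> (nat \<Rightarrow> real) \<Rightarrow> bool" where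
  "reversible_chain G P \<pi> \<longleftrightarrow> (\<forall>x\<in>G. \<pi> x \<ge> 0) \<and> (\<Sum>x\<in>G. \<pi> x) = 1 \<and>
     (\<forall>x\<in>G. \<forall>y\<in>G. \<pi> x * P x y = \<pi> y * P y x)"

definition charpoly :: "nat set \<Rightarrow> (nat \<Rightarrow> nat \<Rightarrow> real) \<Rightarrow> real poly" where
  "charpoly G P = (\<Sum>\<sigma> | \<sigma> permutes G. of_int (sign \<sigma>) *
      (\<Prod>i\<in>G. (if \<sigma> i = i then [:0, 1:] else 0) - [:P i (\<sigma> i):]))"

definition eigenvalues :: "nat set \<Rightarrow> (nat \<Rightarrow> nat \<Rightarrow> real) \<Rightarrow> complex multiset" where
  "eigenvalues G P = proots (map_poly complex_of_real (charpoly G P))"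

text \<open>lambda = max_{j>1} |lambda_j|: drop one copy of the eigenvalue lambda_1 = 1.\<close>
definition slem :: "nat set \<Rightarrow> (nat \<Rightarrow> nat \<Rightarrow> real) \<Rightarrow> real" where
  "slem G P = Max (cmod ` set_mset (eigenvalues G P - {#1#}))"

text \<open>hit_avoid G P x y n z = Pr_z[X_n = y and X_t \<notin> {x,y} for 0 <= t < n].\<close>
fun hit_avoid :: "nat set \<Rightarrow> (nat \<Rightarrow> nat \<Rightarrow> real) \<Rightarrow> nat \<Rightarrow> nat \<Rightarrow> nat \<Rightarrow> nat \<Rightarrow> real" where
  "hit_avoid G P x y 0 z = (if z = y then 1 else 0)"
| "hit_avoid G P x y (Suc n) z =
     (if z = x \<or> z = y then 0 else (\<Sum>w\<in>G. P z w * hit_avoid G P x y n w))"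

text \<open>Pr_x[T_y < T_x^+] = sum over n >= 0 of Pr_x[X_{n+1} = y, X_t \<notin> {x,y} for 1 <= t <= n].\<close>
definition escape_prob :: "nat set \<Rightarrow> (nat \<Rightarrow> nat \<Rightarrow> real) \<Rightarrow> nat \<Rightarrow> nat \<Rightarrow> real" where
  "escape_prob G P x y = (\<Sum>n. \<Sum>w\<in>G. P x w * hit_avoid G P x y n w)"

end

theory Submission
  imports Defs "Jordan_Normal_Form.Char_Poly"
begin

lemma charpoly_eq_char_poly:
  assumes fin: "finite G" and e: "bij_betw e {0..<n} G"
  shows "charpoly G P = char_poly (mat n n (\<lambda>(i,j). P (e i) (e j)))"
proof -
  define A where "A = mat n n (\<lambda>(i,j). P (e i) (e j))"
  define e' where "e' = inv_into {0..<n} e"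
  have e'e: "\<And>i. i \<in> {0..<n} \<Longrightarrow> e' (e i) = i" using e unfolding e'_def
    by (meson bij_betw_inv_into_left)
  have ee': "\<And>x. x \<in> G \<Longrightarrow> e (e' x) = x" using e unfolding e'_def
    by (meson bij_betw_inv_into_right)
  have e'G: "\<And>x. x \<in> G \<Longrightarrow> e' x \<in> {0..<n}" using e unfolding e'_def
    by (meson bij_betw_apply bij_betw_inv_into)
  have eG: "\<And>i. i \<in> {0..<n} \<Longrightarrow> e i \<in> G" using e by (meson bij_betw_apply)
  have e'bij: "bij_betw e' G {0..<n}" using e unfolding e'_def by (rule bij_betw_inv_into)
  have Acar: "A \<in> carrier_mat n n" unfolding A_def by simp
  have CM: "\<And>i k. i < n \<Longrightarrow> k < n \<Longrightarrow> char_poly_matrix A $$ (i,k) =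
      (if i = k then [:0,1:] else 0) + [:- P (e i) (e k):]"
    unfolding char_poly_matrix_def A_def by auto
  define jj where "jj = (\<lambda>\<sigma>::nat\<Rightarrow>nat. (\<lambda>x. if x \<in> {0..<n} then e' (\<sigma> (e x)) else x))"
  define ii where "ii = (\<lambda>p::nat\<Rightarrow>nat. (\<lambda>x. if x \<in> G then e (p (e' x)) else x))"
  have jjperm: "jj \<sigma> permutes {0..<n} \<and> sign (jj \<sigma>) = sign \<sigma>" if "\<sigma> permutes G" for \<sigma>
  proof -
    interpret permutes_bij_finite \<sigma> G "{0..<n}" e' e "jj \<sigma>"
      by unfold_locales (use that e'bij ee' fin in \<open>auto simp: jj_def\<close>)
    show ?thesis using permutes_p' sign_p' by auto
  qed
  have iiperm: "ii p permutes G" if "p permutes {0..<n}" for p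
  proof -
    interpret permutes_bij_finite p "{0..<n}" G e e' "ii p"
      by unfold_locales (use that e e'e in \<open>auto simp: ii_def\<close>)
    show ?thesis using permutes_p' by auto
  qed
  have cp: "char_poly A = (\<Sum>p | p permutes {0..<n}.
     of_int (sign p) * (\<Prod>i = 0..<n. char_poly_matrix A $$ (i, p i)))"
    unfolding char_poly_def by (rule det_def') (use Acar in simp)
  have "charpoly G P = (\<Sum>p | p permutes {0..<n}.
     of_int (sign p) * (\<Prod>i = 0..<n. char_poly_matrix A $$ (i, p i)))"
    unfolding charpoly_def
  proof (rule sum.reindex_bij_witness[where i=ii and j=jj])
    fix \<sigma> assume s: "\<sigma> \<in> {\<sigma>. \<sigma> permutes G}"
    hence sG: "\<And>x. x \<in> G \<Longrightarrow> \<sigma> x \<in> G" by (simp add: permutes_in_image)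
    have sout: "\<And>x. x \<notin> G \<Longrightarrow> \<sigma> x = x" using s by (simp add: permutes_not_in)
    have "ii (jj \<sigma>) x = \<sigma> x" for x
    proof (cases "x \<in> G")
      case True
      then show ?thesis using e'G[OF True] by (simp add: ii_def jj_def ee' sG)
    next
      case False
      then show ?thesis by (simp add: ii_def sout)
    qed
    then show "ii (jj \<sigma>) = \<sigma>" by auto
    show "jj \<sigma> \<in> {p. p permutes {0..<n}}" using jjperm s by auto
    have "(\<Prod>i = 0..<n. char_poly_matrix A $$ (i, jj \<sigma> i)) =
          (\<Prod>i = 0..<n. (if \<sigma> (e i) = e i then [:0, 1:] else 0) - [:P (e i) (\<sigma> (e i)):])"
    proof (rule prod.cong[OF refl])
      fix i assume i: "i \<in> {0..<n}"
      have k: "jj \<sigma> i = e' (\<sigma> (e i))" "e' (\<sigma> (e i)) < n" "e (e' (\<sigma> (e i))) = \<sigma> (e i)"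
        using i e'G ee' sG eG by (auto simp: jj_def)
      have "(i = e' (\<sigma> (e i))) = (\<sigma> (e i) = e i)"
        using i e'e ee' sG eG by metis
      then show "char_poly_matrix A $$ (i, jj \<sigma> i) =
          (if \<sigma> (e i) = e i then [:0, 1:] else 0) - [:P (e i) (\<sigma> (e i)):]"
        using i k by (simp add: CM)
    qed
    also have "\<dots> = (\<Prod>i\<in>G. (if \<sigma> i = i then [:0, 1:] else 0) - [:P i (\<sigma> i):])"
      using prod.reindex_bij_betw[OF e, of "\<lambda>i. (if \<sigma> i = i then [:0, 1:] else 0) - [:P i (\<sigma> i):]"]
      by simp
    finally show "of_int (sign (jj \<sigma>)) * (\<Prod>i = 0..<n. char_poly_matrix A $$ (i, jj \<sigma> i)) =
       of_int (sign \<sigma>) * (\<Prod>i\<in>G. (if \<sigma> i = i then [:0, 1:] else 0) - [:P i (\<sigma> i):])"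
      using jjperm s by simp
  next
    fix p assume p: "p \<in> {p. p permutes {0..<n}}"
    hence pG: "\<And>x. x \<in> {0..<n} \<Longrightarrow> p x \<in> {0..<n}" by (simp add: permutes_in_image)
    have pout: "\<And>x. x \<notin> {0..<n} \<Longrightarrow> p x = x" using p by (simp add: permutes_not_in)
    show "jj (ii p) = p"
      using eG e'e pG pout by (auto simp: ii_def jj_def fun_eq_iff)
    show "ii p \<in> {\<sigma>. \<sigma> permutes G}" using iiperm p by auto
  qed
  then show ?thesis using cp unfolding A_def by simp
qed

lemma eigen_in_slem:
  assumes fin: "finite G" and u0: "u0 \<in> G" "a u0 \<noteq> 0"
    and ev: "\<forall>u\<in>G. (\<Sum>w\<in>G. P u w * a w) = \<mu> * a u" and ne1: "\<mu> \<noteq> 1"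
  shows "\<bar>\<mu>\<bar> \<le> slem G P"
proof -
  define n where "n = card G"
  obtain e where e: "bij_betw e {0..<n} G" using ex_bij_betw_nat_finite[OF fin] n_def by auto
  define A where "A = mat n n (\<lambda>(i,j). P (e i) (e j))"
  define e' where "e' = inv_into {0..<n} e"
  have ee': "\<And>x. x \<in> G \<Longrightarrow> e (e' x) = x" using e unfolding e'_def
    by (meson bij_betw_inv_into_right)
  have e'G: "\<And>x. x \<in> G \<Longrightarrow> e' x \<in> {0..<n}" using e unfolding e'_def
    by (meson bij_betw_apply bij_betw_inv_into)
  have eG: "\<And>i. i \<in> {0..<n} \<Longrightarrow> e i \<in> G" using e by (meson bij_betw_apply)
  have Acar: "A \<in> carrier_mat n n" unfolding A_def by simp
  define v where "v = vec n (\<lambda>i. a (e i))"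
  have vc: "v \<in> carrier_vec n" unfolding v_def by simp
  have vnz: "v \<noteq> 0\<^sub>v n"
  proof
    assume "v = 0\<^sub>v n"
    hence "v $ (e' u0) = 0" using e'G[OF u0(1)] by simp
    thus False using e'G[OF u0(1)] ee'[OF u0(1)] u0(2) unfolding v_def by simp
  qed
  have "A *\<^sub>v v = \<mu> \<cdot>\<^sub>v v"
  proof (rule eq_vecI)
    fix i assume i: "i < dim_vec (\<mu> \<cdot>\<^sub>v v)"
    hence i': "i < n" using vc by simp
    have "(A *\<^sub>v v) $ i = (\<Sum>j = 0..<n. P (e i) (e j) * a (e j))"
      using i' unfolding A_def v_def by (simp add: mult_mat_vec_def scalar_prod_def)
    also have "\<dots> = (\<Sum>w\<in>G. P (e i) w * a w)"
      using sum.reindex_bij_betw[OF e, of "\<lambda>w. P (e i) w * a w"] by simp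
    also have "\<dots> = \<mu> * a (e i)" using ev eG i' by simp
    finally show "(A *\<^sub>v v) $ i = (\<mu> \<cdot>\<^sub>v v) $ i" using i' unfolding v_def by simp
  qed (use vc Acar in simp)
  hence "eigenvalue A \<mu>" unfolding eigenvalue_def eigenvector_def using vc vnz Acar by auto
  hence r: "poly (char_poly A) \<mu> = 0" using eigenvalue_root_char_poly[OF Acar] by simp
  have cpe: "charpoly G P = char_poly A" unfolding A_def by (rule charpoly_eq_char_poly[OF fin e])
  have "coeff (char_poly A) n = 1" using degree_monic_char_poly[OF Acar] by simp
  hence "coeff (map_poly complex_of_real (charpoly G P)) n = 1" using cpe
    by (simp add: coeff_map_poly)
  hence nz: "map_poly complex_of_real (charpoly G P) \<noteq> 0" by auto
  have "poly (map_poly complex_of_real (charpoly G P)) (of_real \<mu>) = 0"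
    using r cpe by (simp add: of_real_hom.poly_map_poly)
  hence "complex_of_real \<mu> \<in># eigenvalues G P" unfolding eigenvalues_def using nz by simp
  moreover have "complex_of_real \<mu> \<noteq> 1" using ne1 by simp
  ultimately have "complex_of_real \<mu> \<in># eigenvalues G P - {#1#}"
    by (simp add: in_diff_count)
  hence "cmod (complex_of_real \<mu>) \<in> cmod ` set_mset (eigenvalues G P - {#1#})" by blast
  hence "cmod (complex_of_real \<mu>) \<le> slem G P" unfolding slem_def
    by (intro Max_ge) auto
  thus ?thesis by simp
qed


definition ipi :: "nat set \<Rightarrow> (nat \<Rightarrow> real) \<Rightarrow> (nat \<Rightarrow> real) \<Rightarrow> (nat \<Rightarrow> real) \<Rightarrow> real" where
  "ipi G \<pi> a b = (\<Sum>u\<in>G. \<pi> u * a u * b u)"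

definition Rb :: "nat set \<Rightarrow> (nat \<Rightarrow> nat \<Rightarrow> real) \<Rightarrow> (nat \<Rightarrow> real) \<Rightarrow> (nat \<Rightarrow> real) \<Rightarrow> (nat \<Rightarrow> real) \<Rightarrow> real" where
  "Rb G P \<pi> a b = (\<Sum>u\<in>G. \<Sum>w\<in>G. \<pi> u * P u w * a u * b w)"

lemma coord_cont [continuous_intros]: "continuous_on S (\<lambda>x::nat\<Rightarrow>real. x i)"
  by (rule continuous_on_subset[OF continuous_on_product_coordinates]) simp

lemma rayleigh_max:
  assumes fin: "finite G" and pos: "\<forall>u\<in>G. \<pi> u > 0"
    and ne: "C \<noteq> {}"
    and C: "C = {a. (\<forall>i. i \<notin> G \<longrightarrow> a i = 0) \<and> ipi G \<pi> a a = 1 \<and> ipi G \<pi> a (\<lambda>_. 1) = 0}"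
  shows "\<exists>a\<in>C. \<forall>b\<in>C. Rb G P \<pi> b b \<le> Rb G P \<pi> a a"
proof -
  define S where "S = (\<lambda>i. if i \<in> G then {-(1 + 1/\<pi> i)..1 + 1/\<pi> i} else {0::real})"
  define K where "K = Pi UNIV S"
  have "compactin (product_topology (\<lambda>i. euclideanreal) UNIV) (PiE UNIV S)"
    by (subst compactin_PiE) (auto simp: S_def)
  hence cK: "compact K" unfolding K_def
    by (simp add: PiE_UNIV_domain euclidean_product_topology)
  have sub: "C \<subseteq> K"
  proof
    fix a assume a: "a \<in> C"
    have "a i \<in> S i" for i
    proof (cases "i \<in> G")
      case True
      have "\<pi> i * a i * a i \<le> (\<Sum>u\<in>G. \<pi> u * a u * a u)"
        by (rule member_le_sum) (use True pos fin in \<open>auto simp: mult.assoc\<close>)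
      hence "\<pi> i * (a i * a i) \<le> 1" using a C unfolding ipi_def by (simp add: mult.assoc)
      hence "a i * a i \<le> 1 / \<pi> i" using pos True by (simp add: field_simps)
      moreover have "\<bar>a i\<bar> \<le> 1 + a i * a i"
      proof -
        have "0 \<le> (\<bar>a i\<bar> - 1) * (\<bar>a i\<bar> - 1)" by simp
        hence "0 \<le> \<bar>a i\<bar> * \<bar>a i\<bar> - 2 * \<bar>a i\<bar> + 1" by (simp add: algebra_simps)
        hence "0 \<le> a i * a i - 2 * \<bar>a i\<bar> + 1" by simp
        moreover have "0 \<le> a i * a i" by simp
        ultimately show ?thesis by linarith
      qed
      ultimately show ?thesis using True unfolding S_def by auto
    next
      case False thus ?thesis using a C unfolding S_def by auto
    qed
    thus "a \<in> K" unfolding K_def by auto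
  qed
  have cl: "closed C" unfolding C ipi_def
  proof (intro closed_Collect_conj closed_Collect_all)
    fix i
    show "closed {x::nat\<Rightarrow>real. i \<notin> G \<longrightarrow> x i = 0}"
    proof (cases "i \<in> G")
      case True thus ?thesis by simp
    next
      case False thus ?thesis by (simp, intro closed_Collect_eq continuous_intros)
    qed
  qed (intro closed_Collect_eq continuous_intros)+
  have cC: "compact C" using compact_Int_closed[OF cK cl] sub by (simp add: Int_absorb1)
  have "continuous_on C (\<lambda>a. Rb G P \<pi> a a)" unfolding Rb_def
    by (intro continuous_on_sum continuous_on_mult continuous_on_const coord_cont)
  from continuous_attains_sup[OF cC ne this] show ?thesis .
qed

definition Pv :: "nat set \<Rightarrow> (nat \<Rightarrow> nat \<Rightarrow> real) \<Rightarrow> (nat \<Rightarrow> real) \<Rightarrow> nat \<Rightarrow> real" where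
  "Pv G P a = (\<lambda>u. \<Sum>w\<in>G. P u w * a w)"

definition sc :: "nat set \<Rightarrow> real \<Rightarrow> (nat \<Rightarrow> real) \<Rightarrow> nat \<Rightarrow> real" where
  "sc G c a = (\<lambda>i. if i \<in> G then c * a i else 0)"

lemma ipi_sym: "ipi G \<pi> a b = ipi G \<pi> b a"
  unfolding ipi_def by (simp add: algebra_simps)

lemma ipi_lin: "ipi G \<pi> (\<lambda>i. a i + t * b i) c = ipi G \<pi> a c + t * ipi G \<pi> b c"
  unfolding ipi_def by (simp add: algebra_simps sum.distrib sum_distrib_left)

lemma ipi_lin2: "ipi G \<pi> c (\<lambda>i. a i + t * b i) = ipi G \<pi> c a + t * ipi G \<pi> c b"
  unfolding ipi_def by (simp add: algebra_simps sum.distrib sum_distrib_left)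

lemma Rb_lin: "Rb G P \<pi> (\<lambda>i. a i + t * b i) c = Rb G P \<pi> a c + t * Rb G P \<pi> b c"
  unfolding Rb_def by (simp add: algebra_simps sum.distrib sum_distrib_left)

lemma Rb_lin2: "Rb G P \<pi> c (\<lambda>i. a i + t * b i) = Rb G P \<pi> c a + t * Rb G P \<pi> c b"
  unfolding Rb_def by (simp add: algebra_simps sum.distrib sum_distrib_left)

lemma ipi_sc: "ipi G \<pi> (sc G c a) d = c * ipi G \<pi> a d"
  unfolding ipi_def sc_def by (simp add: algebra_simps sum_distrib_left)

lemma ipi_sc2: "ipi G \<pi> d (sc G c a) = c * ipi G \<pi> d a"
  unfolding ipi_def sc_def by (simp add: algebra_simps sum_distrib_left)

lemma Rb_sc: "Rb G P \<pi> (sc G c a) d = c * Rb G P \<pi> a d"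
  unfolding Rb_def sc_def by (simp add: algebra_simps sum_distrib_left)

lemma Rb_sc2: "Rb G P \<pi> d (sc G c a) = c * Rb G P \<pi> d a"
  unfolding Rb_def sc_def by (simp add: algebra_simps sum_distrib_left)

lemma Rb_Pv: "Rb G P \<pi> a b = ipi G \<pi> a (Pv G P b)"
  unfolding Rb_def ipi_def Pv_def by (simp add: algebra_simps sum_distrib_left)

lemma Rb_sym:
  assumes rev: "\<forall>u\<in>G. \<forall>w\<in>G. \<pi> u * P u w = \<pi> w * P w u"
  shows "Rb G P \<pi> a b = Rb G P \<pi> b a"
proof -
  have "Rb G P \<pi> a b = (\<Sum>u\<in>G. \<Sum>w\<in>G. \<pi> w * P w u * b w * a u)"
    unfolding Rb_def using rev by (intro sum.cong refl) (simp add: algebra_simps)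
  also have "\<dots> = Rb G P \<pi> b a" unfolding Rb_def by (rule sum.swap)
  finally show ?thesis .
qed

lemma ipi_nonneg:
  assumes "\<forall>u\<in>G. \<pi> u > 0" shows "ipi G \<pi> a a \<ge> 0"
proof (unfold ipi_def, rule sum_nonneg)
  fix x assume "x \<in> G"
  hence "0 \<le> \<pi> x" using assms by (simp add: less_imp_le)
  from mult_nonneg_nonneg[OF this zero_le_square[of "a x"]] show "0 \<le> \<pi> x * a x * a x"
    by (simp add: mult.assoc)
qed

lemma ipi_zero:
  assumes fin: "finite G" and pos: "\<forall>u\<in>G. \<pi> u > 0" and z: "ipi G \<pi> a a = 0" and u: "u \<in> G"
  shows "a u = 0"
proof -
  have "\<forall>u\<in>G. \<pi> u * a u * a u = 0"
    using z fin pos unfolding ipi_def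
    by (subst sum_nonneg_eq_0_iff[symmetric]) (auto simp: mult.assoc)
  thus ?thesis using u pos by fastforce
qed

lemma Rb_zero:
  assumes "\<forall>u\<in>G. a u = 0" shows "Rb G P \<pi> a a = 0"
  unfolding Rb_def using assms by simp

lemma poincare:
  assumes fin: "finite G" and pos: "\<forall>u\<in>G. \<pi> u > 0"
    and rev: "\<forall>u\<in>G. \<forall>w\<in>G. \<pi> u * P u w = \<pi> w * P w u"
    and stoch: "\<forall>u\<in>G. (\<Sum>w\<in>G. P u w) = 1"
    and const: "\<forall>a. (\<forall>u\<in>G. (\<Sum>w\<in>G. P u w * a w) = a u) \<longrightarrow> (\<forall>u\<in>G. \<forall>w\<in>G. a u = a w)"
    and mean: "ipi G \<pi> f (\<lambda>_. 1) = 0"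
  shows "Rb G P \<pi> f f \<le> slem G P * ipi G \<pi> f f"
proof (rule ccontr)
  assume H: "\<not> ?thesis"
  define s where "s = slem G P"
  define q where "q = ipi G \<pi> f f"
  have H': "Rb G P \<pi> f f > s * q" using H unfolding s_def q_def by simp
  have q0: "q \<ge> 0" unfolding q_def by (rule ipi_nonneg[OF pos])
  have qpos: "q > 0"
  proof (rule ccontr)
    assume "\<not> q > 0" hence "q = 0" using q0 by simp
    hence "\<forall>u\<in>G. f u = 0" using ipi_zero[OF fin pos] unfolding q_def by blast
    hence "Rb G P \<pi> f f = 0" by (rule Rb_zero)
    thus False using H' \<open>q = 0\<close> by simp
  qed
  define C where "C = {a. (\<forall>i. i \<notin> G \<longrightarrow> a i = 0) \<and> ipi G \<pi> a a = 1 \<and> ipi G \<pi> a (\<lambda>_. 1) = 0}"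
  have scC: "sc G (1 / sqrt (ipi G \<pi> b b)) b \<in> C" if "ipi G \<pi> b (\<lambda>_. 1) = 0" "ipi G \<pi> b b > 0" for b
  proof -
    have "ipi G \<pi> (sc G (1 / sqrt (ipi G \<pi> b b)) b) (sc G (1 / sqrt (ipi G \<pi> b b)) b) = 1"
      using that by (simp add: ipi_sc ipi_sc2 real_sqrt_mult[symmetric] del: real_sqrt_mult)
    moreover have "ipi G \<pi> (sc G (1 / sqrt (ipi G \<pi> b b)) b) (\<lambda>_. 1) = 0"
      using that by (simp add: ipi_sc)
    moreover have "\<forall>i. i \<notin> G \<longrightarrow> sc G (1 / sqrt (ipi G \<pi> b b)) b i = 0" by (simp add: sc_def)
    ultimately show ?thesis unfolding C_def by blast
  qed
  have RC: "Rb G P \<pi> (sc G (1 / sqrt (ipi G \<pi> b b)) b) (sc G (1 / sqrt (ipi G \<pi> b b)) b)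
      = Rb G P \<pi> b b / ipi G \<pi> b b" if "ipi G \<pi> b b > 0" for b
    using that by (simp add: Rb_sc Rb_sc2 real_sqrt_mult[symmetric] del: real_sqrt_mult)
  define a0 where "a0 = sc G (1 / sqrt q) f"
  have a0C: "a0 \<in> C" unfolding a0_def q_def using scC mean qpos q_def by auto
  obtain a where aC: "a \<in> C" and amax: "\<forall>b\<in>C. Rb G P \<pi> b b \<le> Rb G P \<pi> a a"
    using rayleigh_max[OF fin pos _ C_def] a0C by blast
  define \<mu> where "\<mu> = Rb G P \<pi> a a"
  have "Rb G P \<pi> a0 a0 = Rb G P \<pi> f f / q" unfolding a0_def q_def using RC qpos q_def by simp
  also have "\<dots> > s" using H' qpos by (simp add: field_simps)
  finally have mus: "\<mu> > s" using amax a0C unfolding \<mu>_def by fastforce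
  have a1: "ipi G \<pi> a a = 1" and a2: "ipi G \<pi> a (\<lambda>_. 1) = 0" using aC unfolding C_def by auto
  have Qnn: "Rb G P \<pi> b b \<le> \<mu> * ipi G \<pi> b b" if b: "ipi G \<pi> b (\<lambda>_. 1) = 0" for b
  proof (cases "ipi G \<pi> b b > 0")
    case True
    have "Rb G P \<pi> b b / ipi G \<pi> b b \<le> \<mu>" using amax scC[OF b True] RC[OF True] unfolding \<mu>_def by metis
    thus ?thesis using True by (simp add: field_simps)
  next
    case False
    hence "ipi G \<pi> b b = 0" using ipi_nonneg[OF pos, of b] by simp
    hence "\<forall>u\<in>G. b u = 0" using ipi_zero[OF fin pos] by blast
    thus ?thesis using \<open>ipi G \<pi> b b = 0\<close> Rb_zero by simp
  qed
  have beta0: "\<mu> * ipi G \<pi> a b - Rb G P \<pi> a b = 0" if b: "ipi G \<pi> b (\<lambda>_. 1) = 0" for b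
  proof -
    define \<beta> where "\<beta> = \<mu> * ipi G \<pi> a b - Rb G P \<pi> a b"
    define Qb where "Qb = \<mu> * ipi G \<pi> b b - Rb G P \<pi> b b"
    have Qb0: "Qb \<ge> 0" using Qnn[OF b] unfolding Qb_def by simp
    define t where "t = - \<beta> / (Qb + 1)"
    have tb: "\<beta> = - t * (Qb + 1)" unfolding t_def using Qb0 by (simp add: field_simps)
    define z where "z = (\<lambda>i. a i + t * b i)"
    have "ipi G \<pi> z (\<lambda>_. 1) = 0" unfolding z_def using a2 b by (simp add: ipi_lin)
    hence "Rb G P \<pi> z z \<le> \<mu> * ipi G \<pi> z z" by (rule Qnn)
    moreover have "Rb G P \<pi> z z = \<mu> + 2 * t * Rb G P \<pi> a b + t * t * Rb G P \<pi> b b"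
      unfolding z_def \<mu>_def using Rb_sym[OF rev, of a b] by (simp add: Rb_lin Rb_lin2 algebra_simps)
    moreover have "ipi G \<pi> z z = 1 + 2 * t * ipi G \<pi> a b + t * t * ipi G \<pi> b b"
      unfolding z_def using a1 ipi_sym[of G \<pi> a b] by (simp add: ipi_lin ipi_lin2 algebra_simps)
    ultimately have "0 \<le> 2 * t * \<beta> + t * t * Qb" unfolding \<beta>_def Qb_def by (simp add: algebra_simps)
    hence "0 \<le> t * t * (- Qb - 2)" unfolding tb by (simp add: algebra_simps)
    moreover have "t * t \<ge> 0" by simp
    moreover have "- Qb - 2 \<le> 0" using Qb0 by simp
    ultimately have "t * t * (- Qb - 2) \<le> 0" using mult_nonneg_nonpos by blast
    with \<open>0 \<le> t * t * (- Qb - 2)\<close> have "t * t * (- Qb - 2) = 0" by linarith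
    moreover have "- Qb - 2 \<noteq> 0" using Qb0 by simp
    ultimately have "t * t = 0" by simp
    hence "t = 0" by simp
    thus ?thesis using tb unfolding \<beta>_def by simp
  qed
  define r where "r = (\<lambda>u. \<mu> * a u - Pv G P a u)"
  have rb: "ipi G \<pi> r b = \<mu> * ipi G \<pi> a b - Rb G P \<pi> a b" for b
  proof -
    have "Rb G P \<pi> a b = Rb G P \<pi> b a" by (rule Rb_sym[OF rev])
    also have "\<dots> = ipi G \<pi> (Pv G P a) b" by (simp add: Rb_Pv ipi_sym)
    finally show ?thesis unfolding r_def ipi_def
      by (simp add: algebra_simps sum_subtractf sum_distrib_left)
  qed
  have P1: "Pv G P (\<lambda>_. 1) u = 1" if "u \<in> G" for u using stoch that unfolding Pv_def by simp
  have "ipi G \<pi> (Pv G P a) (\<lambda>_. 1) = ipi G \<pi> a (\<lambda>_. 1)"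
  proof -
    have "ipi G \<pi> (Pv G P a) (\<lambda>_. 1) = Rb G P \<pi> (\<lambda>_. 1) a" by (simp add: Rb_Pv ipi_sym)
    also have "\<dots> = Rb G P \<pi> a (\<lambda>_. 1)" by (rule Rb_sym[OF rev])
    also have "\<dots> = ipi G \<pi> a (Pv G P (\<lambda>_. 1))" by (rule Rb_Pv)
    also have "\<dots> = ipi G \<pi> a (\<lambda>_. 1)" unfolding ipi_def using P1 by (intro sum.cong) (auto simp: one_def)
    finally show ?thesis .
  qed
  moreover have "ipi G \<pi> r (\<lambda>_. 1) = \<mu> * ipi G \<pi> a (\<lambda>_. 1) - ipi G \<pi> (Pv G P a) (\<lambda>_. 1)"
    unfolding r_def ipi_def by (simp add: algebra_simps sum_subtractf sum_distrib_left)
  ultimately have r1: "ipi G \<pi> r (\<lambda>_. 1) = 0" using a2 by simp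
  have "ipi G \<pi> r r = 0" using rb[of r] beta0[OF r1] by simp
  hence eig: "\<forall>u\<in>G. (\<Sum>w\<in>G. P u w * a w) = \<mu> * a u"
    using ipi_zero[OF fin pos] unfolding r_def Pv_def by fastforce
  have "\<exists>u0\<in>G. a u0 \<noteq> 0"
  proof (rule ccontr)
    assume "\<not> (\<exists>u0\<in>G. a u0 \<noteq> 0)" hence "\<forall>u\<in>G. a u = 0" by simp
    hence "ipi G \<pi> a a = 0" unfolding ipi_def by simp
    thus False using a1 by simp
  qed
  then obtain u0 where u0: "u0 \<in> G" "a u0 \<noteq> 0" by blast
  have ne1: "\<mu> \<noteq> 1"
  proof
    assume "\<mu> = 1"
    hence "\<forall>u\<in>G. \<forall>w\<in>G. a u = a w" using const eig by simp
    hence au: "\<And>u. u \<in> G \<Longrightarrow> a u = a u0" using u0 by blast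
    have "ipi G \<pi> a (\<lambda>_. 1) = (\<Sum>u\<in>G. a u0 * \<pi> u)" unfolding ipi_def
      by (intro sum.cong refl) (simp add: au)
    hence "ipi G \<pi> a (\<lambda>_. 1) = a u0 * (\<Sum>u\<in>G. \<pi> u)" by (simp add: sum_distrib_left)
    moreover have "(\<Sum>u\<in>G. \<pi> u) > 0" using u0 fin pos by (intro sum_pos) auto
    ultimately show False using a2 u0 by simp
  qed
  have "\<bar>\<mu>\<bar> \<le> s" unfolding s_def by (rule eigen_in_slem[OF fin u0 eig ne1])
  thus False using mus by simp
qed

lemma hit_nonneg:
  assumes st: "stochastic G P" and z: "z \<in> G"
  shows "hit_avoid G P x y n z \<ge> 0"
  using z
proof (induction n arbitrary: z)
  case 0 thus ?case by simp
next
  case (Suc n)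
  have "\<forall>w\<in>G. P z w \<ge> 0" using st Suc.prems unfolding stochastic_def by auto
  thus ?case using Suc by (auto intro!: sum_nonneg)
qed

lemma hit_partial:
  assumes fin: "finite G" and st: "stochastic G P" and xy: "x \<noteq> y" and z: "z \<in> G"
  shows "(\<Sum>n<N. hit_avoid G P x y n z) \<le> 1"
  using z
proof (induction N arbitrary: z)
  case 0 thus ?case by simp
next
  case (Suc N)
  have split: "(\<Sum>n<Suc N. hit_avoid G P x y n z) =
      hit_avoid G P x y 0 z + (\<Sum>n<N. hit_avoid G P x y (Suc n) z)"
    by (rule sum.lessThan_Suc_shift)
  show ?case
  proof (cases "z = x \<or> z = y")
    case True
    thus ?thesis unfolding split using xy by auto
  next
    case False
    have "(\<Sum>n<N. hit_avoid G P x y (Suc n) z) = (\<Sum>n<N. \<Sum>w\<in>G. P z w * hit_avoid G P x y n w)"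
      using False by simp
    also have "\<dots> = (\<Sum>w\<in>G. P z w * (\<Sum>n<N. hit_avoid G P x y n w))"
      by (simp add: sum.swap[of _ "{..<N}"] sum_distrib_left)
    also have "\<dots> \<le> (\<Sum>w\<in>G. P z w * 1)"
    proof (rule sum_mono)
      fix w assume w: "w \<in> G"
      have "P z w \<ge> 0" using st Suc.prems w unfolding stochastic_def by auto
      thus "P z w * (\<Sum>n<N. hit_avoid G P x y n w) \<le> P z w * 1"
        using Suc.IH[OF w] mult_left_mono by blast
    qed
    also have "\<dots> = 1" using st Suc.prems unfolding stochastic_def by auto
    finally show ?thesis unfolding split using False by simp
  qed
qed

lemma hit_summable:
  assumes fin: "finite G" and st: "stochastic G P" and xy: "x \<noteq> y" and z: "z \<in> G"
  shows "summable (\<lambda>n. hit_avoid G P x y n z)"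
proof (rule bounded_imp_summable)
  show "\<And>n. 0 \<le> hit_avoid G P x y n z" using hit_nonneg[OF st z] .
  fix n
  have "(\<Sum>k\<le>n. hit_avoid G P x y k z) = (\<Sum>k<Suc n. hit_avoid G P x y k z)"
    by (simp add: lessThan_Suc_atMost)
  also have "\<dots> \<le> 1" by (rule hit_partial[OF fin st xy z])
  finally show "(\<Sum>k\<le>n. hit_avoid G P x y k z) \<le> 1" .
qed

lemma hit_props:
  assumes fin: "finite G" and st: "stochastic G P" and x: "x \<in> G" and y: "y \<in> G" and xy: "x \<noteq> y"
    and F: "F = (\<lambda>z. \<Sum>n. hit_avoid G P x y n z)"
  shows "\<forall>z\<in>G. 0 \<le> F z \<and> F z \<le> 1" "F x = 0" "F y = 1"
    "\<forall>z\<in>G. z \<noteq> x \<longrightarrow> z \<noteq> y \<longrightarrow> Pv G P F z = F z"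
    "escape_prob G P x y = Pv G P F x"
proof -
  note sm = hit_summable[OF fin st xy]
  show "\<forall>z\<in>G. 0 \<le> F z \<and> F z \<le> 1"
  proof
    fix z assume z: "z \<in> G"
    show "0 \<le> F z \<and> F z \<le> 1" unfolding F
      using suminf_nonneg[OF sm[OF z] hit_nonneg[OF st z]]
        suminf_le_const[OF sm[OF z] hit_partial[OF fin st xy z]] by simp
  qed
  have "\<And>n. hit_avoid G P x y n x = 0"
    subgoal for n using xy by (cases n) auto done
  thus "F x = 0" unfolding F by simp
  have h0: "(\<Sum>n. hit_avoid G P x y (Suc n) y) = 0" by simp
  have "(\<Sum>n. hit_avoid G P x y (Suc n) y) = F y - hit_avoid G P x y 0 y"
    unfolding F by (rule suminf_split_head[OF sm[OF y]])
  thus "F y = 1" using h0 by simp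
  have swap: "(\<Sum>n. \<Sum>w\<in>G. P z w * hit_avoid G P x y n w) = Pv G P F z" for z
  proof -
    have "(\<Sum>n. \<Sum>w\<in>G. P z w * hit_avoid G P x y n w) = (\<Sum>w\<in>G. \<Sum>n. P z w * hit_avoid G P x y n w)"
      by (rule suminf_sum) (intro summable_mult sm)
    also have "\<dots> = (\<Sum>w\<in>G. P z w * F w)"
      by (intro sum.cong refl) (simp add: F suminf_mult sm)
    finally show ?thesis unfolding Pv_def .
  qed
  show "escape_prob G P x y = Pv G P F x" unfolding escape_prob_def by (rule swap)
  show "\<forall>z\<in>G. z \<noteq> x \<longrightarrow> z \<noteq> y \<longrightarrow> Pv G P F z = F z"
  proof (intro ballI impI)
    fix z assume z: "z \<in> G" and zx: "z \<noteq> x" and zy: "z \<noteq> y"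
    have "(\<Sum>n. hit_avoid G P x y (Suc n) z) = F z - hit_avoid G P x y 0 z"
      unfolding F by (rule suminf_split_head[OF sm[OF z]])
    moreover have "(\<Sum>n. hit_avoid G P x y (Suc n) z) = Pv G P F z"
      using zx zy swap[of z] by simp
    ultimately show "Pv G P F z = F z" using zy by simp
  qed
qed


lemma mpow_nonneg:
  assumes st: "stochastic G P" and c: "c \<in> G"
  shows "mpow G P n c b \<ge> 0"
  using c
proof (induction n arbitrary: c)
  case 0 thus ?case by simp
next
  case (Suc n)
  have "\<forall>w\<in>G. P c w \<ge> 0" using st Suc.prems unfolding stochastic_def by auto
  thus ?case using Suc by (auto intro!: sum_nonneg)
qed

lemma mpow_step:
  assumes st: "stochastic G P" and a: "a \<in> G" and pos: "mpow G P (Suc n) a b > 0"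
  shows "\<exists>c\<in>G. P a c > 0 \<and> mpow G P n c b > 0"
proof (rule ccontr)
  assume "\<not> ?thesis"
  hence "\<forall>c\<in>G. P a c * mpow G P n c b = 0"
  proof (intro ballI)
    fix c assume nc: "\<not> (\<exists>c\<in>G. P a c > 0 \<and> mpow G P n c b > 0)" and c: "c \<in> G"
    have "P a c \<ge> 0" using st a c unfolding stochastic_def by auto
    moreover have "mpow G P n c b \<ge> 0" by (rule mpow_nonneg[OF st c])
    ultimately show "P a c * mpow G P n c b = 0" using nc c by force
  qed
  hence "(\<Sum>c\<in>G. P a c * mpow G P n c b) = 0" by (intro sum.neutral) blast
  hence "mpow G P (Suc n) a b = 0" by simp
  thus False using pos by simp
qed

lemma pi_pos:
  assumes fin: "finite G" and st: "stochastic G P" and irr: "irreducible_chain G P"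
    and rev: "reversible_chain G P \<pi>"
  shows "\<forall>u\<in>G. \<pi> u > 0"
proof -
  have pi0: "\<forall>u\<in>G. \<pi> u \<ge> 0" and s1: "(\<Sum>u\<in>G. \<pi> u) = 1"
    and db: "\<forall>u\<in>G. \<forall>w\<in>G. \<pi> u * P u w = \<pi> w * P w u"
    using rev unfolding reversible_chain_def by auto
  have prp: "\<pi> b > 0" if "a \<in> G" "b \<in> G" "\<pi> a > 0" "mpow G P n a b > 0" for n a b
    using that
  proof (induction n arbitrary: a)
    case 0 thus ?case by (simp split: if_splits)
  next
    case (Suc n)
    obtain c where c: "c \<in> G" "P a c > 0" "mpow G P n c b > 0"
      using mpow_step[OF st Suc.prems(1,4)] by blast
    have "\<pi> c * P c a = \<pi> a * P a c" using db c Suc.prems by metis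
    also have "\<dots> > 0" using Suc.prems c by simp
    finally have "\<pi> c \<noteq> 0" by auto
    hence "\<pi> c > 0" using pi0 c by force
    thus ?case using Suc.IH[OF c(1) Suc.prems(2) _ c(3)] by simp
  qed
  have "\<exists>a\<in>G. \<pi> a > 0"
  proof (rule ccontr)
    assume "\<not> ?thesis"
    hence "\<forall>a\<in>G. \<pi> a = 0" using pi0 by force
    hence "(\<Sum>u\<in>G. \<pi> u) = 0" by simp
    thus False using s1 by simp
  qed
  then obtain a where a: "a \<in> G" "\<pi> a > 0" by blast
  show ?thesis
  proof
    fix b assume b: "b \<in> G"
    obtain n where "mpow G P n a b > 0" using irr a b unfolding irreducible_chain_def by blast
    thus "\<pi> b > 0" using prp[OF a(1) b a(2)] by simp
  qed
qed

lemma harmonic_const: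
  assumes fin: "finite G" and st: "stochastic G P" and irr: "irreducible_chain G P"
  shows "\<forall>a. (\<forall>u\<in>G. (\<Sum>w\<in>G. P u w * a w) = a u) \<longrightarrow> (\<forall>u\<in>G. \<forall>w\<in>G. a u = a w)"
proof (intro allI impI ballI)
  fix a u w assume h: "\<forall>u\<in>G. (\<Sum>w\<in>G. P u w * a w) = a u" and u: "u \<in> G" and w: "w \<in> G"
  define M where "M = Max (a ` G)"
  have le: "\<And>v. v \<in> G \<Longrightarrow> a v \<le> M" unfolding M_def using fin by auto
  have ne: "G \<noteq> {}" using u by auto
  have "M \<in> a ` G" unfolding M_def using fin ne by (intro Max_in) auto
  then obtain z0 where z0: "z0 \<in> G" "a z0 = M" by auto
  have prp: "a b = M" if "v \<in> G" "b \<in> G" "a v = M" "mpow G P n v b > 0" for n v b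
    using that
  proof (induction n arbitrary: v)
    case 0 thus ?case by (simp split: if_splits)
  next
    case (Suc n)
    obtain c where c: "c \<in> G" "P v c > 0" "mpow G P n c b > 0"
      using mpow_step[OF st Suc.prems(1,4)] by blast
    have "(\<Sum>c\<in>G. P v c * (M - a c)) = M * (\<Sum>c\<in>G. P v c) - (\<Sum>c\<in>G. P v c * a c)"
      by (simp add: algebra_simps sum_subtractf sum_distrib_left)
    also have "\<dots> = 0" using st h Suc.prems unfolding stochastic_def by auto
    finally have "\<forall>c'\<in>G. P v c' * (M - a c') = 0"
      using fin st Suc.prems le
      by (subst sum_nonneg_eq_0_iff[symmetric]) (auto simp: stochastic_def)
    hence "a c = M" using c by auto
    thus ?case using Suc.IH[OF c(1) Suc.prems(2) _ c(3)] by simp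
  qed
  obtain n1 where "mpow G P n1 z0 u > 0" using irr z0 u unfolding irreducible_chain_def by blast
  hence "a u = M" using prp[OF z0(1) u z0(2)] by simp
  moreover obtain n2 where "mpow G P n2 z0 w > 0" using irr z0 w unfolding irreducible_chain_def by blast
  hence "a w = M" using prp[OF z0(1) w z0(2)] by simp
  ultimately show "a u = a w" by simp
qed

theorem mainTheorem2:
  shows "\<exists>c>0. \<forall>(G::nat set) P \<pi>.
    finite G \<and> G \<noteq> {} \<and> stochastic G P \<and> irreducible_chain G P \<and> aperiodic_chain G P \<and>
    reversible_chain G P \<pi> \<longrightarrow>
    (\<forall>x\<in>G. \<forall>y\<in>G. x \<noteq> y \<longrightarrow>
       escape_prob G P x y \<ge> c * (1 - slem G P) * Min (\<pi> ` G) / Max (\<pi> ` G))"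
proof (rule exI[of _ "1/2::real"], intro conjI allI impI ballI)
  show "(0::real) < 1/2" by simp
  fix G :: "nat set" and P \<pi> x y
  assume H: "finite G \<and> G \<noteq> {} \<and> stochastic G P \<and> irreducible_chain G P \<and> aperiodic_chain G P \<and>
    reversible_chain G P \<pi>" and x: "x \<in> G" and y: "y \<in> G" and xy: "x \<noteq> y"
  have fin: "finite G" and st: "stochastic G P" and irr: "irreducible_chain G P"
    and rv: "reversible_chain G P \<pi>" using H by auto
  have pos: "\<forall>u\<in>G. \<pi> u > 0" by (rule pi_pos[OF fin st irr rv])
  have s1: "(\<Sum>u\<in>G. \<pi> u) = 1" and rev: "\<forall>u\<in>G. \<forall>w\<in>G. \<pi> u * P u w = \<pi> w * P w u"
    using rv unfolding reversible_chain_def by auto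
  have stoch: "\<forall>u\<in>G. (\<Sum>w\<in>G. P u w) = 1" and Pnn: "\<forall>u\<in>G. \<forall>w\<in>G. P u w \<ge> 0"
    using st unfolding stochastic_def by auto
  note const = harmonic_const[OF fin st irr]
  define F where "F = (\<lambda>z. \<Sum>n. hit_avoid G P x y n z)"
  note hp = hit_props[OF fin st x y xy F_def]
  define e where "e = escape_prob G P x y"
  have e: "e = Pv G P F x" unfolding e_def by (rule hp(5))
  define one where "one = (\<lambda>_::nat. 1::real)"
  define g where "g = (\<lambda>u. 1 - F u)"
  define m where "m = ipi G \<pi> g one"
  define ft where "ft = (\<lambda>i. g i + (- m) * one i)"
  define s where "s = slem G P"
  have P1: "Pv G P one u = 1" if "u \<in> G" for u using stoch that unfolding Pv_def one_def by simp
  have ipi11: "ipi G \<pi> one one = 1" unfolding ipi_def one_def using s1 by simp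
  have Rb11: "Rb G P \<pi> one one = 1"
  proof -
    have "Rb G P \<pi> one one = ipi G \<pi> one (Pv G P one)" by (rule Rb_Pv)
    also have "\<dots> = ipi G \<pi> one one" unfolding ipi_def using P1 by (intro sum.cong) (auto simp: one_def)
    finally show ?thesis using ipi11 by simp
  qed
  have Rbg1: "Rb G P \<pi> g one = m"
  proof -
    have "Rb G P \<pi> g one = ipi G \<pi> g (Pv G P one)" by (rule Rb_Pv)
    also have "\<dots> = ipi G \<pi> g one" unfolding ipi_def using P1 by (intro sum.cong) (auto simp: one_def)
    finally show ?thesis unfolding m_def .
  qed
  have Rb1g: "Rb G P \<pi> one g = m" using Rbg1 Rb_sym[OF rev, of one g] by simp
  have ipi1g: "ipi G \<pi> one g = m" unfolding m_def by (rule ipi_sym)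
  have mean: "ipi G \<pi> ft one = 0"
    unfolding ft_def ipi_lin ipi11 m_def by simp
  have Poin: "Rb G P \<pi> ft ft \<le> s * ipi G \<pi> ft ft"
    unfolding s_def using poincare[OF fin pos rev stoch const mean[unfolded one_def]] .
  have Eq: "ipi G \<pi> ft ft - Rb G P \<pi> ft ft = ipi G \<pi> g g - Rb G P \<pi> g g"
    unfolding ft_def ipi_lin ipi_lin2 Rb_lin Rb_lin2 ipi11 Rb11 Rbg1 Rb1g ipi1g m_def[symmetric]
    by (simp add: algebra_simps)
  have Pvg: "Pv G P g u = 1 - Pv G P F u" if "u \<in> G" for u
  proof -
    have "Pv G P g u = (\<Sum>w\<in>G. P u w) - Pv G P F u"
      unfolding Pv_def g_def by (simp add: algebra_simps sum_subtractf)
    thus ?thesis using stoch that by simp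
  qed
  have "ipi G \<pi> g g - Rb G P \<pi> g g = (\<Sum>u\<in>G. \<pi> u * g u * (g u - Pv G P g u))"
    unfolding Rb_Pv ipi_def by (simp add: algebra_simps sum_subtractf)
  also have "\<dots> = \<pi> x * g x * (g x - Pv G P g x)"
  proof -
    have "(\<Sum>u\<in>G. \<pi> u * g u * (g u - Pv G P g u)) =
        \<pi> x * g x * (g x - Pv G P g x) + (\<Sum>u\<in>G - {x}. \<pi> u * g u * (g u - Pv G P g u))"
      by (rule sum.remove[OF fin x])
    moreover have "(\<Sum>u\<in>G - {x}. \<pi> u * g u * (g u - Pv G P g u)) = 0"
    proof (rule sum.neutral, intro ballI)
      fix u assume u: "u \<in> G - {x}"
      show "\<pi> u * g u * (g u - Pv G P g u) = 0"
      proof (cases "u = y")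
        case True thus ?thesis using hp(3) unfolding g_def by simp
      next
        case False
        thus ?thesis using u hp(4) Pvg[of u] unfolding g_def by auto
      qed
    qed
    ultimately show ?thesis by simp
  qed
  also have "\<dots> = \<pi> x * e" using hp(2) Pvg[OF x] e unfolding g_def by simp
  finally have Ex: "ipi G \<pi> ft ft - Rb G P \<pi> ft ft = \<pi> x * e" using Eq by simp
  define V where "V = ipi G \<pi> ft ft"
  have VE: "(1 - s) * V \<le> \<pi> x * e" using Poin Ex unfolding V_def by (simp add: algebra_simps)
  have ftx: "ft x = 1 - m" and fty: "ft y = - m" unfolding ft_def g_def one_def using hp(2,3) by auto
  have "V \<ge> (\<Sum>u\<in>{x,y}. \<pi> u * ft u * ft u)" unfolding V_def ipi_def
  proof (rule sum_mono2[OF fin])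
    show "{x, y} \<subseteq> G" using x y by auto
    fix u assume "u \<in> G - {x,y}"
    hence "0 \<le> \<pi> u" using pos by (simp add: less_imp_le)
    from mult_nonneg_nonneg[OF this zero_le_square[of "ft u"]]
    show "0 \<le> \<pi> u * ft u * ft u" by (simp add: mult.assoc)
  qed
  hence V2: "V \<ge> \<pi> x * (1 - m) * (1 - m) + \<pi> y * m * m" using xy ftx fty by simp
  define px where "px = \<pi> x"
  define py where "py = \<pi> y"
  have pxp: "px > 0" and pyp: "py > 0" using pos x y unfolding px_def py_def by auto
  have "(px + py) * (px * (1 - m) * (1 - m) + py * m * m) - px * py = (px * (1 - m) - py * m) * (px * (1 - m) - py * m)"
    by (simp add: algebra_simps)
  moreover have "(px * (1 - m) - py * m) * (px * (1 - m) - py * m) \<ge> 0" by simp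
  ultimately have "(px + py) * (px * (1 - m) * (1 - m) + py * m * m) \<ge> px * py" by linarith
  hence W: "px * (1 - m) * (1 - m) + py * m * m \<ge> px * py / (px + py)"
    using pxp pyp by (simp add: field_simps)
  define mn where "mn = Min (\<pi> ` G)"
  define mx where "mx = Max (\<pi> ` G)"
  have mny: "mn \<le> py" unfolding mn_def py_def using fin y by auto
  have mxx: "px \<le> mx" unfolding mx_def px_def using fin x by auto
  have mxy: "py \<le> mx" unfolding mx_def py_def using fin y by auto
  have "mn \<in> \<pi> ` G" unfolding mn_def using fin x by (intro Min_in) auto
  hence mnp: "mn > 0" using pos by auto
  have e0: "e \<ge> 0" unfolding e Pv_def using hp(1) Pnn x by (auto intro!: sum_nonneg)
  have final: "1 / 2 * (1 - s) * mn / mx \<le> e"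
  proof (cases "1 - s \<ge> 0")
    case False
    hence "1 / 2 * (1 - s) * mn / mx \<le> 0" using mnp mxx pxp
      by (simp add: divide_nonpos_pos mult_nonpos_nonneg)
    thus ?thesis using e0 by linarith
  next
    case True
    have "px * e \<ge> (1 - s) * (px * py / (px + py))"
      using VE V2 W True unfolding px_def py_def
      by (meson mult_left_mono order_trans)
    moreover have "(1 - s) * (px * py / (px + py)) = px * ((1 - s) * (py / (px + py)))" by simp
    ultimately have "px * ((1 - s) * (py / (px + py))) \<le> px * e" by linarith
    hence e1: "e \<ge> (1 - s) * (py / (px + py))" by (rule mult_left_le_imp_le[OF _ pxp])
    have "mn / (2 * mx) \<le> py / (px + py)"
      using mny mxx mxy pxp pyp by (intro frac_le) auto
    hence "(1 - s) * (mn / (2 * mx)) \<le> (1 - s) * (py / (px + py))" using True by (rule mult_left_mono)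
    hence "(1 - s) * (mn / (2 * mx)) \<le> e" using e1 by linarith
    thus ?thesis by (simp add: field_simps)
  qed
  thus "1 / 2 * (1 - slem G P) * Min (\<pi> ` G) / Max (\<pi> ` G) \<le> escape_prob G P x y"
    unfolding e_def s_def mn_def mx_def .
qed

end
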